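(* Let $\theta^*\in\mathbb{R}^n$, let $\phi:\mathbb{R}_{\ge0}\to\mathbb{R}^n$ be piecewise continuous and bounded, and $y^*(t):=\phi^T(t)\theta^*$. Let $t_1,\dots,t_N\ge0$ be such that $\mathcal{D}=[\phi(t_1),\dots,\phi(t_N)]$ has rank $n$. Let $\beta,\gamma,\mu>0$ with $\beta\ge2\gamma/\mu$, $\mathcal{N}_t:=1+\mu\phi^T(t)\phi(t)$, and $$B(\theta,\mu):=\sum_{k=1}^N\frac{\phi(t_k)}{1+\mu\phi^T(t_k)\phi(t_k)}\big(\phi^T(t_k)\theta-y^*(t_k)\big).$$ Then $(\theta^*,\theta^* )$ is uniformly globally asymptotically stable for the system in $(\theta,\vartheta)\in\mathbb{R}^{2n}$ $$\dot\theta=-\beta(\theta-\vartheta)\mathcal{N}_t,\qquad\dot\vartheta=-\gamma\Big(\phi(t)\big(\phi^T(t)\theta-y^*(t)\big)+\mathcal{N}_tB(\theta,\mu)\Big).$$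
   Context: No persistent excitation is assumed. For a system $\dot x=f(x,t)$ with equilibrium $x^*$: uniformly globally stable (UGS) means there is a class-$\mathcal{K}_\infty$ function $\kappa$ with $|x(t)-x^*|\le\kappa(|x_\circ-x^*|)$ for all $t\ge t_\circ$, for every solution from every $(x_\circ,t_\circ)$; uniformly globally attractive (UGA) means for each $r,\sigma>0$ there is $T'>0$ with $|x_\circ-x^*|\le r\Rightarrow|x(t)-x^*|\le\sigma$ for all $t\ge t_\circ+T'$, uniformly in $t_\circ\ge0$; UGAS means UGS and UGA. *)

theory Defs
  imports "HOL-Analysis.Analysis"
begin

definition classK_inf :: "(real \<Rightarrow> real) \<Rightarrow> bool" where
  "classK_inf \<kappa> \<longleftrightarrow> continuous_on {0..} \<kappa> \<and> \<kappa> 0 = 0 \<and>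
     strict_mono_on {0..} \<kappa> \<and> filterlim \<kappa> at_top at_top"

definition piecewise_continuous :: "(real \<Rightarrow> 'a::topological_space) \<Rightarrow> bool" where
  "piecewise_continuous \<phi> \<longleftrightarrow>
     (\<forall>T\<ge>0. \<exists>S. finite S \<and> continuous_on ({0..T} - S) \<phi> \<and>
        (\<forall>s\<in>S. (\<exists>l. (\<phi> \<longlongrightarrow> l) (at_right s)) \<and> (s > 0 \<longrightarrow> (\<exists>l. (\<phi> \<longlongrightarrow> l) (at_left s)))))"

text \<open>(Caratheodory) solution of x' = f(x,t) on [t0,t1] with x(t0) = x0,
  in integral form.\<close>
definition is_solution_on ::
  "('a::euclidean_space \<Rightarrow> real \<Rightarrow> 'a) \<Rightarrow> real \<Rightarrow> real \<Rightarrow> 'a \<Rightarrow> (real \<Rightarrow> 'a) \<Rightarrow> bool" where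
  "is_solution_on f t0 t1 x0 x \<longleftrightarrow> t0 \<le> t1 \<and> x t0 = x0 \<and> continuous_on {t0..t1} x \<and>
     (\<forall>t\<in>{t0..t1}. ((\<lambda>s. f (x s) s) has_integral (x t - x0)) {t0..t})"

definition UGS :: "('a::euclidean_space \<Rightarrow> real \<Rightarrow> 'a) \<Rightarrow> 'a \<Rightarrow> bool" where
  "UGS f xs \<longleftrightarrow> (\<exists>\<kappa>. classK_inf \<kappa> \<and>
     (\<forall>t0 t1 x0 x. t0 \<ge> 0 \<and> is_solution_on f t0 t1 x0 x \<longrightarrow>
        (\<forall>t\<in>{t0..t1}. norm (x t - xs) \<le> \<kappa> (norm (x0 - xs)))))"

definition UGA :: "('a::euclidean_space \<Rightarrow> real \<Rightarrow> 'a) \<Rightarrow> 'a \<Rightarrow> bool" where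
  "UGA f xs \<longleftrightarrow> (\<forall>r>0. \<forall>\<sigma>>0. \<exists>T'>0.
     (\<forall>t0 t1 x0 x. t0 \<ge> 0 \<and> is_solution_on f t0 t1 x0 x \<and> norm (x0 - xs) \<le> r \<longrightarrow>
        (\<forall>t\<in>{t0..t1}. t \<ge> t0 + T' \<longrightarrow> norm (x t - xs) \<le> \<sigma>)))"

definition UGAS :: "('a::euclidean_space \<Rightarrow> real \<Rightarrow> 'a) \<Rightarrow> 'a \<Rightarrow> bool" where
  "UGAS f xs \<longleftrightarrow> UGS f xs \<and> UGA f xs"

end

theory Submission imports Defs begin

lemma alg:
  fixes e w p Qe :: "real^'n"
  assumes N: "N = 1 + \<mu> * (p \<bullet> p)" and mu: "\<mu> > 0" and b: "\<beta> > 0" and g: "\<gamma> > 0"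
    and bg: "\<beta> * \<mu> \<ge> 2 * \<gamma>" and qe: "e \<bullet> Qe \<ge> 0"
    and de: "de = (- \<beta> * N) *\<^sub>R (e - w)"
    and dw: "dw = (- \<gamma>) *\<^sub>R ((p \<bullet> e) *\<^sub>R p + N *\<^sub>R Qe)"
  shows "2 * \<gamma> * (de \<bullet> Qe) + \<beta> * (w \<bullet> dw) + \<beta> * ((e - w) \<bullet> (de - dw))
         \<le> - \<beta> * \<gamma> * (e \<bullet> Qe) - \<beta>^2 * ((e - w) \<bullet> (e - w))"
proof -
  define z where "z = e - w"
  have w: "w = e - z" by (simp add: z_def)
  define a where "a = p \<bullet> e"
  define bb where "bb = p \<bullet> z"
  define qe where "qe = e \<bullet> Qe"
  define qz where "qz = z \<bullet> Qe"
  define zz where "zz = z \<bullet> z"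
  define pp where "pp = p \<bullet> p"
  have cs: "bb^2 \<le> pp * zz"
  proof -
    have "\<bar>bb\<bar> \<le> norm p * norm z" unfolding bb_def by (rule Cauchy_Schwarz_ineq2)
    hence "bb^2 \<le> (norm p * norm z)^2"
      by (metis abs_ge_zero power2_abs power_mono)
    thus ?thesis by (simp add: pp_def zz_def power_mult_distrib dot_square_norm)
  qed
  have lhs: "2 * \<gamma> * (de \<bullet> Qe) + \<beta> * (w \<bullet> dw) + \<beta> * ((e - w) \<bullet> (de - dw))
     = - \<beta>*\<gamma>*a^2 + 2*\<beta>*\<gamma>*a*bb - \<beta>*\<gamma>*N*qe - \<beta>^2*N*zz"
    unfolding de dw w
    by (simp add: a_def bb_def qe_def qz_def zz_def inner_simps inner_commute algebra_simps power2_eq_square)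
  have "- \<beta>*\<gamma>*a^2 + 2*\<beta>*\<gamma>*a*bb \<le> \<beta>*\<gamma>*bb^2"
  proof -
    have "0 \<le> \<beta>*\<gamma>*(a - bb)^2" using b g by simp
    thus ?thesis by (simp add: power2_eq_square algebra_simps)
  qed
  moreover have "\<beta>*\<gamma>*bb^2 \<le> \<beta>*\<gamma>*pp*zz" using cs b g by (simp add: mult.assoc)
  moreover have "\<beta>*\<gamma>*N*qe \<ge> \<beta>*\<gamma>*qe"
  proof -
    have "N \<ge> 1" using N mu by (simp add: mult_nonneg_nonneg)
    hence "N*qe \<ge> 1*qe" using qe by (intro mult_right_mono) (auto simp: qe_def)
    thus ?thesis using b g by (simp add: mult.assoc)
  qed
  moreover have "\<beta>^2*N*zz \<ge> \<beta>^2*zz + \<beta>*\<gamma>*pp*zz"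
  proof -
    have zz0: "zz \<ge> 0" "pp \<ge> 0" by (simp_all add: zz_def pp_def)
    have "\<beta>^2*N*zz = \<beta>^2*zz + \<beta>*(\<beta>*\<mu>)*pp*zz" using N by (simp add: pp_def power2_eq_square algebra_simps)
    moreover have "\<beta>*(\<beta>*\<mu>)*pp*zz \<ge> \<beta>*\<gamma>*pp*zz"
      using bg b g zz0 by (intro mult_right_mono mult_left_mono) (auto intro: mult_nonneg_nonneg)
    ultimately show ?thesis by linarith
  qed
  ultimately show ?thesis unfolding lhs using z_def qe_def zz_def by (simp add: qe_def zz_def z_def)
qed

lemma rank_inj:
  fixes ph :: "'m::finite \<Rightarrow> real^'n"
  assumes "rank ((\<chi> i k. ph k $ i) :: real^'m^'n) = CARD('n)"
  shows "\<forall>e. (\<forall>k. ph k \<bullet> e = 0) \<longrightarrow> e = 0"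
proof (intro allI impI)
  fix e :: "real^'n" assume h: "\<forall>k. ph k \<bullet> e = 0"
  let ?A = "(\<chi> i k. ph k $ i) :: real^'m^'n"
  have I: "inj ((*v) (transpose ?A))"
    using assms by (simp add: full_rank_injective[symmetric] rank_transpose)
  have "transpose ?A *v e = 0"
    using h by (simp add: vec_eq_iff matrix_vector_mult_def transpose_def inner_vec_def)
  hence T: "transpose ?A *v e = transpose ?A *v 0" by simp
  show "e = 0" using injD[OF I T] .
qed

lemma posdef:
  fixes ph :: "'m::finite \<Rightarrow> real^'n"
  assumes inj: "\<forall>e. (\<forall>k. ph k \<bullet> e = 0) \<longrightarrow> e = 0" and Np: "\<forall>k. w k > 0"
  shows "\<exists>l>0. \<forall>e. l * (e \<bullet> e) \<le> (\<Sum>k\<in>UNIV. w k * (ph k \<bullet> e)^2)"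
proof -
  define h where "h e = (\<Sum>k\<in>UNIV. w k * (ph k \<bullet> e)^2)" for e :: "real^'n"
  have hpos: "h e > 0" if "e \<noteq> 0" for e
  proof -
    have "\<exists>k. ph k \<bullet> e \<noteq> 0"
    proof (rule ccontr)
      assume "\<not> (\<exists>k. ph k \<bullet> e \<noteq> 0)"
      hence "\<forall>k. ph k \<bullet> e = 0" by simp
      hence "e = 0" using inj by simp
      thus False using that by simp
    qed
    then obtain k where k: "ph k \<bullet> e \<noteq> 0" ..
    have "(ph k \<bullet> e)^2 > 0" using k by simp
    hence "w k * (ph k \<bullet> e)^2 > 0" using Np by (simp add: mult_pos_pos)
    also have "\<dots> \<le> h e" unfolding h_def
      by (rule member_le_sum) (auto intro!: mult_nonneg_nonneg less_imp_le[OF Np[rule_format]])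
    finally show ?thesis .
  qed
  have hs: "h (c *\<^sub>R e) = c^2 * h e" for c e
    by (simp add: h_def sum_distrib_left power_mult_distrib algebra_simps)
  have cont: "continuous_on (sphere 0 1) h"
  proof -
    show ?thesis unfolding h_def by (intro continuous_intros)
  qed
  have ne: "sphere (0::real^'n) 1 \<noteq> {}" by simp
  obtain x0 where x0: "x0 \<in> sphere 0 1" "\<forall>y\<in>sphere 0 1. h x0 \<le> h y"
    using continuous_attains_inf[OF compact_sphere ne cont] by blast
  have "x0 \<noteq> 0" using x0(1) by auto
  hence l0: "h x0 > 0" by (rule hpos)
  show ?thesis
  proof (intro exI[of _ "h x0"] conjI allI l0)
    fix e :: "real^'n"
    show "h x0 * (e \<bullet> e) \<le> (\<Sum>k\<in>UNIV. w k * (ph k \<bullet> e)^2)"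
    proof (cases "e = 0")
      case True thus ?thesis by (simp add: power2_eq_square)
    next
      case False
      define u where "u = (1 / norm e) *\<^sub>R e"
      have u: "u \<in> sphere 0 1" using False by (simp add: u_def)
      have e: "e = norm e *\<^sub>R u" using False by (simp add: u_def)
      have "h e = (norm e)^2 * h u" by (subst e) (rule hs)
      moreover have "h x0 \<le> h u" using x0 u by blast
      ultimately have "h x0 * (norm e)^2 \<le> h e"
        by (metis mult.commute mult_right_mono zero_le_power2)
      thus ?thesis by (simp add: h_def dot_square_norm)
    qed
  qed
qed

lemma sol_deriv:
  fixes x :: "real \<Rightarrow> 'a::euclidean_space"
  assumes sol: "is_solution_on F t0 t1 x0 x"
    and s: "t0 < s" "s < t1"
    and cont: "continuous (at s) (\<lambda>r. F (x r) r)"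
  shows "(x has_vector_derivative F (x s) s) (at s)"
proof -
  let ?g = "\<lambda>r. F (x r) r"
  have hi: "\<And>t. t \<in> {t0..t1} \<Longrightarrow> (?g has_integral (x t - x0)) {t0..t}"
    using sol by (simp add: is_solution_on_def)
  have x0: "x t0 = x0" using sol by (simp add: is_solution_on_def)
  have int: "?g integrable_on {t0..t1}" using hi[of t1] s by auto
  have "((\<lambda>u. integral {t0..u} ?g) has_vector_derivative ?g s) (at s within ({t0..t1} - {}))"
    by (rule integral_has_vector_derivative_continuous_at[OF int])
       (use s cont in \<open>auto intro: continuous_at_imp_continuous_within\<close>)
  hence d1: "((\<lambda>u. integral {t0..u} ?g) has_vector_derivative ?g s) (at s)"
    using s by (simp add: at_within_Icc_at)
  hence d2: "((\<lambda>u. x0 + integral {t0..u} ?g) has_vector_derivative ?g s) (at s)"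
    by (auto intro!: derivative_eq_intros)
  show ?thesis
  proof (rule has_vector_derivative_transform_within_open[OF d2, of "{t0<..<t1}"])
    fix y assume y: "y \<in> {t0<..<t1}"
    hence "integral {t0..y} ?g = x y - x0" using hi[of y] by (auto intro: integral_unique)
    thus "x0 + integral {t0..y} ?g = x y" by simp
  qed (use s in auto)
qed

lemma decay:
  fixes x :: "real \<Rightarrow> 'a::euclidean_space" and V :: "'a \<Rightarrow> real"
  assumes sol: "is_solution_on F t0 t1 x0 x"
    and S: "finite S"
    and cont: "\<And>s. s \<in> {t0<..<t1} - S \<Longrightarrow> continuous (at s) (\<lambda>r. F (x r) r)"
    and Vd: "\<And>X. (V has_derivative DV X) (at X)"
    and dec: "\<And>s X. DV X (F X s) \<le> - c * V X"
    and t: "t \<in> {t0..t1}"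
  shows "V (x t) \<le> exp (- c * (t - t0)) * V x0"
proof -
  define W where "W s = exp (c * s) * V (x s)" for s
  define W' where "W' s = exp (c * s) * (c * V (x s) + DV (x s) (F (x s) s))" for s
  have xc: "continuous_on {t0..t1} x" using sol by (simp add: is_solution_on_def)
  have x0: "x t0 = x0" using sol by (simp add: is_solution_on_def)
  have Vc: "continuous_on UNIV V"
    using Vd has_derivative_continuous by (blast intro: continuous_at_imp_continuous_on)
  have Wc: "continuous_on {t0..t} W"
  proof -
    have "continuous_on {t0..t} x" using t by (intro continuous_on_subset[OF xc]) auto
    hence "continuous_on {t0..t} (\<lambda>s. V (x s))"
      by (rule continuous_on_compose2[OF Vc]) auto
    thus ?thesis unfolding W_def by (intro continuous_intros)
  qed
  have Wd: "(W has_vector_derivative W' s) (at s)" if s: "s \<in> {t0<..<t} - S" for s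
  proof -
    have s1: "s \<in> {t0<..<t1} - S" using s t by auto
    have xd: "(x has_vector_derivative F (x s) s) (at s)"
      using sol_deriv[OF sol _ _ cont[OF s1]] s1 by auto
    have lin: "linear (DV (x s))" using Vd has_derivative_linear by blast
    have "((\<lambda>r. V (x r)) has_derivative (\<lambda>h. DV (x s) (h *\<^sub>R F (x s) s))) (at s)"
      using has_derivative_compose[OF xd[unfolded has_vector_derivative_def] Vd] .
    hence "((\<lambda>r. V (x r)) has_derivative (\<lambda>h. h * DV (x s) (F (x s) s))) (at s)"
      using linear_scale[OF lin] by simp
    moreover have "(\<lambda>h. h * DV (x s) (F (x s) s)) = (*) (DV (x s) (F (x s) s))"
      by (rule ext) (simp only: mult.commute)
    ultimately have vd: "((\<lambda>r. V (x r)) has_real_derivative DV (x s) (F (x s) s)) (at s)"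
      by (simp only: has_field_derivative_def)
    have "(W has_real_derivative W' s) (at s)"
      unfolding W_def W'_def
      by (rule derivative_eq_intros vd | simp add: algebra_simps)+
    thus ?thesis by (simp add: has_real_derivative_iff_has_vector_derivative)
  qed
  have tt: "t0 \<le> t" using t by auto
  have I: "(W' has_integral (W t - W t0)) {t0..t}"
    by (rule fundamental_theorem_of_calculus_interior_strong[OF S tt Wd Wc])
  have "W t - W t0 \<le> 0"
  proof (rule has_integral_le[OF I has_integral_0])
    fix s show "W' s \<le> 0"
      using dec[of "x s" s] unfolding W'_def
      by (intro mult_nonneg_nonpos) auto
  qed
  hence "exp (c*t) * V (x t) \<le> exp (c*t0) * V x0" by (simp add: W_def x0)
  hence "exp (-(c*t)) * (exp (c*t) * V (x t)) \<le> exp (-(c*t)) * (exp (c*t0) * V x0)"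
    by (rule mult_left_mono) simp
  moreover have "exp (-(c*t)) * (exp (c*t) * V (x t)) = V (x t)"
  proof -
    have "exp (-(c*t)) * exp (c*t) = 1" by (simp add: exp_minus)
    thus ?thesis by (metis mult.assoc mult_1)
  qed
  moreover have "exp (-(c*t)) * (exp (c*t0) * V x0) = exp (- c * (t - t0)) * V x0"
  proof -
    have "exp (-(c*t)) * exp (c*t0) = exp (- c * (t - t0))"
      by (simp add: exp_add[symmetric] right_diff_distrib)
    thus ?thesis by (metis mult.assoc)
  qed
  ultimately show ?thesis by simp
qed

lemma ugas_from_lyap:
  fixes F :: "'a::euclidean_space \<Rightarrow> real \<Rightarrow> 'a" and V :: "'a \<Rightarrow> real"
  assumes a: "a > 0" and b: "b > 0" and c: "c > 0"
    and lo: "\<And>X. a * (norm (X - xs))^2 \<le> V X"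
    and hi: "\<And>X. V X \<le> b * (norm (X - xs))^2"
    and dec: "\<And>t0 t1 x0 x t. t0 \<ge> 0 \<Longrightarrow> is_solution_on F t0 t1 x0 x \<Longrightarrow> t \<in> {t0..t1}
                 \<Longrightarrow> V (x t) \<le> exp (- c * (t - t0)) * V x0"
  shows "UGAS F xs"
proof -
  have core: "(norm (x t - xs))^2 \<le> (b / a) * exp (- c * (t - t0)) * (norm (x0 - xs))^2"
    if "t0 \<ge> 0" "is_solution_on F t0 t1 x0 x" "t \<in> {t0..t1}" for t0 t1 x0 x t
  proof -
    have "a * (norm (x t - xs))^2 \<le> exp (- c * (t - t0)) * V x0"
      using lo[of "x t"] dec[OF that] by linarith
    also have "\<dots> \<le> exp (- c * (t - t0)) * (b * (norm (x0 - xs))^2)"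
      by (rule mult_left_mono[OF hi]) simp
    finally have "a * (norm (x t - xs))^2 \<le> exp (- c * (t - t0)) * (b * (norm (x0 - xs))^2)" .
    thus ?thesis using a by (simp add: field_simps)
  qed
  define K where "K = sqrt (b / a)"
  have K: "K > 0" using a b by (simp add: K_def)
  have ugs: "UGS F xs"
    unfolding UGS_def
  proof (intro exI[of _ "\<lambda>r. K * r"] conjI allI impI ballI)
    show "classK_inf (\<lambda>r. K * r)"
      unfolding classK_inf_def
    proof (intro conjI)
      show "continuous_on {0..} (\<lambda>r. K * r)" by (intro continuous_intros)
      show "K * 0 = 0" by simp
      show "strict_mono_on {0..} (\<lambda>r. K * r)" using K by (auto simp: strict_mono_on_def)
      show "filterlim (\<lambda>r. K * r) at_top at_top"
        by (rule filterlim_tendsto_pos_mult_at_top[OF tendsto_const K filterlim_ident])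
    qed
  next
    fix t0 t1 x0 x t
    assume h: "0 \<le> t0 \<and> is_solution_on F t0 t1 x0 x" and t: "t \<in> {t0..t1}"
    have "(norm (x t - xs))^2 \<le> (b / a) * exp (- c * (t - t0)) * (norm (x0 - xs))^2"
      using core h t by blast
    also have "\<dots> \<le> (b / a) * 1 * (norm (x0 - xs))^2"
      using t c a b by (intro mult_right_mono mult_left_mono) (auto simp: mult_nonneg_nonneg)
    also have "\<dots> = (K * norm (x0 - xs))^2"
      using a b by (simp add: K_def power_mult_distrib)
    finally have sq: "(norm (x t - xs))^2 \<le> (K * norm (x0 - xs))^2" .
    have "0 \<le> K * norm (x0 - xs)" using K by simp
    thus "norm (x t - xs) \<le> K * norm (x0 - xs)" by (rule power2_le_imp_le[OF sq])
  qed
  have uga: "UGA F xs"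
    unfolding UGA_def
  proof (intro allI impI)
    fix r \<sigma> :: real assume r: "r > 0" and s: "\<sigma> > 0"
    define A where "A = (b / a) * r^2 / \<sigma>^2"
    have A: "A > 0" using a b r s by (simp add: A_def)
    define T where "T = max 1 (ln A / c)"
    have T: "T > 0" by (simp add: T_def)
    have eT: "exp (- c * T) \<le> 1 / A"
    proof -
      have "ln A / c \<le> T" by (simp add: T_def)
      hence "c * (ln A / c) \<le> c * T" using c by (intro mult_left_mono) auto
      hence "ln A \<le> c * T" using c by simp
      hence "- c * T \<le> - ln A" by simp
      hence "exp (- c * T) \<le> exp (- ln A)" by simp
      also have "\<dots> = 1 / A" using A by (simp add: exp_minus inverse_eq_divide)
      finally show ?thesis .
    qed
    show "\<exists>T'>0. \<forall>t0 t1 x0 x. t0 \<ge> 0 \<and> is_solution_on F t0 t1 x0 x \<and> norm (x0 - xs) \<le> r \<longrightarrow>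
        (\<forall>t\<in>{t0..t1}. t \<ge> t0 + T' \<longrightarrow> norm (x t - xs) \<le> \<sigma>)"
    proof (intro exI[of _ T] conjI allI impI ballI T)
      fix t0 t1 x0 x t
      assume h: "0 \<le> t0 \<and> is_solution_on F t0 t1 x0 x \<and> norm (x0 - xs) \<le> r"
        and t: "t \<in> {t0..t1}" and tT: "t0 + T \<le> t"
      have "(norm (x t - xs))^2 \<le> (b / a) * exp (- c * (t - t0)) * (norm (x0 - xs))^2"
        using core h t by blast
      also have "\<dots> \<le> (b / a) * exp (- c * T) * r^2"
      proof -
        have "exp (- c * (t - t0)) \<le> exp (- c * T)" using c tT by simp
        moreover have "(norm (x0 - xs))^2 \<le> r^2" using h by (intro power_mono) auto
        ultimately show ?thesis using a b
          by (intro mult_mono mult_left_mono) auto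
      qed
      also have "\<dots> \<le> (b / a) * (1 / A) * r^2"
        using eT a b by (intro mult_right_mono mult_left_mono) auto
      also have "\<dots> = \<sigma>^2" using a b r s by (simp add: A_def field_simps)
      finally have sq: "(norm (x t - xs))^2 \<le> \<sigma>^2" .
      have "0 \<le> \<sigma>" using s by simp
      thus "norm (x t - xs) \<le> \<sigma>" by (rule power2_le_imp_le[OF sq])
    qed
  qed
  show ?thesis using ugs uga by (simp add: UGAS_def)
qed

lemma cs_sq:
  fixes x y :: "real^'n"
  shows "(x \<bullet> y)^2 \<le> (x \<bullet> x) * (y \<bullet> y)"
proof -
  have "\<bar>x \<bullet> y\<bar> \<le> norm x * norm y" by (rule Cauchy_Schwarz_ineq2)
  hence "(x \<bullet> y)^2 \<le> (norm x * norm y)^2"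
    by (metis abs_ge_zero power2_abs power_mono)
  thus ?thesis by (simp add: power_mult_distrib dot_square_norm)
qed

lemma par_ineq:
  fixes a b :: "real^'n"
  shows "(a - b) \<bullet> (a - b) \<le> 2 * (a \<bullet> a) + 2 * (b \<bullet> b)"
proof -
  have "0 \<le> (a + b) \<bullet> (a + b)" by simp
  thus ?thesis by (simp add: inner_simps inner_commute algebra_simps)
qed

lemma normsq_pair:
  fixes a b :: "real^'n"
  shows "(norm (a, b))^2 = a \<bullet> a + b \<bullet> b"
  by (simp add: norm_Pair power2_norm_eq_inner)


lemma V_bounds:
  fixes th vth \<theta>s :: "real^'n"
  assumes q0: "0 \<le> q" and qle: "q \<le> Lam * ((th - \<theta>s) \<bullet> (th - \<theta>s))"
    and pos: "\<beta> > 0" "\<gamma> > 0" and Lam0: "Lam \<ge> 0"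
  shows "\<beta>/6 * (norm ((th, vth) - (\<theta>s, \<theta>s)))^2
           \<le> \<gamma> * q + \<beta>/2 * ((vth - \<theta>s) \<bullet> (vth - \<theta>s)) + \<beta>/2 * ((th - vth) \<bullet> (th - vth))"
    and "\<gamma> * q + \<beta>/2 * ((vth - \<theta>s) \<bullet> (vth - \<theta>s)) + \<beta>/2 * ((th - vth) \<bullet> (th - vth))
           \<le> (\<gamma> * Lam + 3 * \<beta> / 2) * (norm ((th, vth) - (\<theta>s, \<theta>s)))^2"
proof -
  define e where "e = th - \<theta>s"
  define ww where "ww = vth - \<theta>s"
  define z where "z = th - vth"
  have n: "(norm ((th, vth) - (\<theta>s, \<theta>s)))^2 = e \<bullet> e + ww \<bullet> ww"
    by (simp add: e_def ww_def normsq_pair)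
  have e1: "e \<bullet> e \<le> 2 * (ww \<bullet> ww) + 2 * (z \<bullet> z)"
  proof -
    have "e = ww - (vth - th)" by (simp add: e_def ww_def)
    hence "e \<bullet> e = (ww - (vth - th)) \<bullet> (ww - (vth - th))" by simp
    also have "\<dots> \<le> 2 * (ww \<bullet> ww) + 2 * ((vth - th) \<bullet> (vth - th))" by (rule par_ineq)
    also have "(vth - th) \<bullet> (vth - th) = z \<bullet> z"
      by (simp add: z_def inner_simps inner_commute)
    finally show ?thesis .
  qed
  have z1: "z \<bullet> z \<le> 2 * (e \<bullet> e) + 2 * (ww \<bullet> ww)"
  proof -
    have "z = e - ww" by (simp add: e_def ww_def z_def)
    thus ?thesis by (simp add: par_ineq)
  qed
  have g0: "\<gamma> * q \<ge> 0" using q0 pos by simp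
  have nn: "e \<bullet> e \<ge> 0" "ww \<bullet> ww \<ge> 0" "z \<bullet> z \<ge> 0" by simp_all
  have "\<beta>/6 * (e \<bullet> e + ww \<bullet> ww) \<le> \<beta>/6 * (3 * (ww \<bullet> ww) + 2 * (z \<bullet> z))"
    using e1 pos by (intro mult_left_mono) auto
  also have "\<dots> \<le> \<beta>/6 * (3 * (ww \<bullet> ww) + 3 * (z \<bullet> z))"
    using nn pos by (intro mult_left_mono) auto
  finally have "\<beta>/6 * (e \<bullet> e + ww \<bullet> ww) \<le> \<gamma> * q + \<beta>/2 * (ww \<bullet> ww) + \<beta>/2 * (z \<bullet> z)"
    using g0 by (simp add: algebra_simps)
  thus "\<beta>/6 * (norm ((th, vth) - (\<theta>s, \<theta>s)))^2
           \<le> \<gamma> * q + \<beta>/2 * ((vth - \<theta>s) \<bullet> (vth - \<theta>s)) + \<beta>/2 * ((th - vth) \<bullet> (th - vth))"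
    unfolding n by (simp add: e_def[symmetric] ww_def[symmetric] z_def[symmetric])
  have f0: "\<gamma> * q \<le> \<gamma> * Lam * (e \<bullet> e)" using qle pos by (simp add: mult_left_mono e_def mult.assoc)
  have "\<beta>/2 * (z \<bullet> z) \<le> \<beta>/2 * (2 * (e \<bullet> e) + 2 * (ww \<bullet> ww))"
    using z1 pos by (intro mult_left_mono) auto
  hence f1: "\<beta>/2 * (z \<bullet> z) \<le> \<beta> * (e \<bullet> e) + \<beta> * (ww \<bullet> ww)" by (simp add: algebra_simps)
  have f2: "\<gamma> * Lam * (ww \<bullet> ww) \<ge> 0"
    using Lam0 pos nn by (intro mult_nonneg_nonneg) auto
  have f3: "\<beta> * (e \<bullet> e) \<ge> 0" "\<beta> * (ww \<bullet> ww) \<ge> 0" using pos nn by simp_all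
  have R: "(\<gamma> * Lam + 3 * \<beta> / 2) * (e \<bullet> e + ww \<bullet> ww) = \<gamma> * Lam * (e \<bullet> e) + \<gamma> * Lam * (ww \<bullet> ww)
     + 3/2 * (\<beta> * (e \<bullet> e)) + 3/2 * (\<beta> * (ww \<bullet> ww))" by (simp add: algebra_simps)
  have "\<gamma> * q + \<beta>/2 * (ww \<bullet> ww) + \<beta>/2 * (z \<bullet> z) \<le> (\<gamma> * Lam + 3 * \<beta> / 2) * (e \<bullet> e + ww \<bullet> ww)"
    unfolding R using f0 f1 f2 f3 by linarith
  thus "\<gamma> * q + \<beta>/2 * ((vth - \<theta>s) \<bullet> (vth - \<theta>s)) + \<beta>/2 * ((th - vth) \<bullet> (th - vth))
           \<le> (\<gamma> * Lam + 3 * \<beta> / 2) * (norm ((th, vth) - (\<theta>s, \<theta>s)))^2"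
    unfolding n by (simp add: e_def[symmetric] ww_def[symmetric] z_def[symmetric])
qed

lemma lyap_dec:
  fixes pk :: "'m::finite \<Rightarrow> real^'n" and w :: "'m \<Rightarrow> real" and \<theta>s th vth p de dw :: "real^'n"
    and \<beta> \<gamma> \<mu> l Lam c N :: real
  defines "Qf \<equiv> \<lambda>e. (\<Sum>k\<in>UNIV. w k *\<^sub>R ((pk k \<bullet> e) *\<^sub>R pk k))"
  defines "qs \<equiv> \<lambda>e. (\<Sum>k\<in>UNIV. w k * (pk k \<bullet> e)^2)"
  assumes pos: "\<beta> > 0" "\<gamma> > 0" "\<mu> > 0" and bg: "\<beta> * \<mu> \<ge> 2 * \<gamma>"
    and l: "l > 0" "\<forall>e. l * (e \<bullet> e) \<le> qs e" and wpos: "\<forall>k. w k > 0"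
    and Lam: "Lam = (\<Sum>k\<in>UNIV. w k * (pk k \<bullet> pk k))"
    and c: "c = min (\<beta> * \<gamma> * l / (\<gamma> * Lam + \<beta>)) (2 * \<beta> / 3)"
    and N: "N = 1 + \<mu> * (p \<bullet> p)"
    and de: "de = (- \<beta> * N) *\<^sub>R (th - vth)"
    and dw: "dw = (- \<gamma>) *\<^sub>R ((p \<bullet> (th - \<theta>s)) *\<^sub>R p + N *\<^sub>R Qf (th - \<theta>s))"
  shows "2 * \<gamma> * (de \<bullet> Qf (th - \<theta>s)) + \<beta> * ((vth - \<theta>s) \<bullet> dw) + \<beta> * ((th - vth) \<bullet> (de - dw))
     \<le> - c * (\<gamma> * qs (th - \<theta>s) + \<beta>/2 * ((vth - \<theta>s) \<bullet> (vth - \<theta>s)) + \<beta>/2 * ((th - vth) \<bullet> (th - vth)))"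
proof -
  define e where "e = th - \<theta>s"
  define ww where "ww = vth - \<theta>s"
  define z where "z = th - vth"
  have ez: "e - ww = z" by (simp add: e_def ww_def z_def)
  have wez: "ww = e - z" by (simp add: e_def ww_def z_def)
  have qsQ: "e \<bullet> Qf e = qs e"
    by (simp add: Qf_def qs_def inner_sum_right power2_eq_square algebra_simps inner_commute[of e])
  have qs0: "qs e \<ge> 0" unfolding qs_def by (intro sum_nonneg mult_nonneg_nonneg less_imp_le[OF wpos[rule_format]] zero_le_power2)
  have Lam0: "Lam \<ge> 0" unfolding Lam by (intro sum_nonneg mult_nonneg_nonneg less_imp_le[OF wpos[rule_format]] inner_ge_zero)
  have qsle: "qs e \<le> Lam * (e \<bullet> e)"
  proof -
    have "qs e \<le> (\<Sum>k\<in>UNIV. w k * ((pk k \<bullet> pk k) * (e \<bullet> e)))"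
      unfolding qs_def by (intro sum_mono mult_left_mono cs_sq less_imp_le[OF wpos[rule_format]])
    also have "\<dots> = (\<Sum>k\<in>UNIV. w k * (pk k \<bullet> pk k)) * (e \<bullet> e)"
      by (simp add: sum_distrib_right mult.assoc)
    also have "\<dots> = Lam * (e \<bullet> e)" by (simp add: Lam)
    finally show ?thesis .
  qed
  have A: "2 * \<gamma> * (de \<bullet> Qf e) + \<beta> * (ww \<bullet> dw) + \<beta> * ((e - ww) \<bullet> (de - dw))
         \<le> - \<beta> * \<gamma> * (e \<bullet> Qf e) - \<beta>^2 * ((e - ww) \<bullet> (e - ww))"
    by (rule alg[OF N pos(3) pos(1) pos(2) bg]) (use qsQ qs0 de dw in \<open>simp_all add: e_def ww_def\<close>)
  hence A': "2 * \<gamma> * (de \<bullet> Qf e) + \<beta> * (ww \<bullet> dw) + \<beta> * (z \<bullet> (de - dw))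
         \<le> - \<beta> * \<gamma> * qs e - \<beta>^2 * (z \<bullet> z)"
    by (simp add: ez qsQ)
  have ee: "e \<bullet> e \<ge> 0" "z \<bullet> z \<ge> 0" by simp_all
  have wwle: "ww \<bullet> ww \<le> 2 * (e \<bullet> e) + 2 * (z \<bullet> z)" unfolding wez by (rule par_ineq)
  define Vv where "Vv = \<gamma> * qs e + \<beta>/2 * (ww \<bullet> ww) + \<beta>/2 * (z \<bullet> z)"
  have Vle: "Vv \<le> (\<gamma> * Lam + \<beta>) * (e \<bullet> e) + (3 * \<beta> / 2) * (z \<bullet> z)"
  proof -
    have "\<gamma> * qs e \<le> \<gamma> * (Lam * (e \<bullet> e))" using qsle pos by (intro mult_left_mono) auto
    moreover have "\<beta>/2 * (ww \<bullet> ww) \<le> \<beta>/2 * (2 * (e \<bullet> e) + 2 * (z \<bullet> z))"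
      using wwle pos by (intro mult_left_mono) auto
    ultimately show ?thesis unfolding Vv_def by (simp add: algebra_simps)
  qed
  have D: "\<gamma> * Lam + \<beta> > 0" using pos Lam0 by (simp add: add_nonneg_pos)
  have c0: "c \<ge> 0" unfolding c using pos l D by (auto intro!: divide_nonneg_pos mult_nonneg_nonneg)
  have c1: "c * (\<gamma> * Lam + \<beta>) \<le> \<beta> * \<gamma> * l"
  proof -
    have "c \<le> \<beta> * \<gamma> * l / (\<gamma> * Lam + \<beta>)" unfolding c by (rule min.cobounded1)
    thus ?thesis using D by (simp add: le_divide_eq)
  qed
  have c2: "c * (3 * \<beta> / 2) \<le> \<beta>^2"
  proof -
    have "c \<le> 2 * \<beta> / 3" unfolding c by (rule min.cobounded2)
    hence "c * (3 * \<beta> / 2) \<le> (2 * \<beta> / 3) * (3 * \<beta> / 2)" using pos by (intro mult_right_mono) auto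
    thus ?thesis by (simp add: power2_eq_square)
  qed
  have "c * Vv \<le> c * ((\<gamma> * Lam + \<beta>) * (e \<bullet> e) + (3 * \<beta> / 2) * (z \<bullet> z))"
    using Vle c0 by (rule mult_left_mono)
  also have "\<dots> = (c * (\<gamma> * Lam + \<beta>)) * (e \<bullet> e) + (c * (3 * \<beta> / 2)) * (z \<bullet> z)"
    by (simp add: algebra_simps)
  also have "\<dots> \<le> (\<beta> * \<gamma> * l) * (e \<bullet> e) + \<beta>^2 * (z \<bullet> z)"
    using c1 c2 ee by (intro add_mono mult_right_mono) auto
  also have "\<dots> \<le> \<beta> * \<gamma> * qs e + \<beta>^2 * (z \<bullet> z)"
  proof -
    have "(\<beta> * \<gamma>) * (l * (e \<bullet> e)) \<le> (\<beta> * \<gamma>) * qs e" using l pos by (intro mult_left_mono) auto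
    thus ?thesis by (simp add: algebra_simps)
  qed
  finally have "c * Vv \<le> \<beta> * \<gamma> * qs e + \<beta>^2 * (z \<bullet> z)" .
  with A' show ?thesis unfolding Vv_def e_def ww_def z_def by simp
qed

lemma cont_F:
  fixes \<theta>s :: "real^'n" and \<phi> :: "real \<Rightarrow> real^'n" and tk :: "'m::finite \<Rightarrow> real"
    and \<beta> \<gamma> \<mu> :: real and F :: "(real^'n) \<times> (real^'n) \<Rightarrow> real \<Rightarrow> (real^'n) \<times> (real^'n)"
  assumes pc: "piecewise_continuous \<phi>"
    and pos: "\<beta> > 0" "\<gamma> > 0" "\<mu> > 0"
    and Feq: "\<And>th vth t. F (th, vth) t = ((- \<beta> * (1 + \<mu> * (\<phi> t \<bullet> \<phi> t))) *\<^sub>R (th - vth),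
        (- \<gamma>) *\<^sub>R ((\<phi> t \<bullet> (th - \<theta>s)) *\<^sub>R \<phi> t + (1 + \<mu> * (\<phi> t \<bullet> \<phi> t)) *\<^sub>R
           (\<Sum>k\<in>UNIV. (1 / (1 + \<mu> * (\<phi> (tk k) \<bullet> \<phi> (tk k)))) *\<^sub>R ((\<phi> (tk k) \<bullet> (th - \<theta>s)) *\<^sub>R \<phi> (tk k)))))"
    and t0: "t0 \<ge> 0" and sol: "is_solution_on F t0 t1 x0 x"
  shows "\<exists>S. finite S \<and> (\<forall>s\<in>{t0<..<t1} - S. continuous (at s) (\<lambda>r. F (x r) r))"
proof -
  have t1: "t1 \<ge> 0" using sol t0 by (simp add: is_solution_on_def)
  obtain S where S: "finite S" "continuous_on ({0..t1} - S) \<phi>"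
    using pc t1 unfolding piecewise_continuous_def by blast
  have xc: "continuous_on {t0..t1} x" using sol by (simp add: is_solution_on_def)
  define U where "U = {t0<..<t1} - S"
  have U: "open U" unfolding U_def by (intro open_Diff finite_imp_closed S) auto
  have "continuous_on U \<phi>" using t0 by (intro continuous_on_subset[OF S(2)]) (auto simp: U_def)
  hence phc: "\<And>s. s \<in> U \<Longrightarrow> isCont \<phi> s" using U continuous_on_eq_continuous_at by blast
  have "continuous_on U x" by (intro continuous_on_subset[OF xc]) (auto simp: U_def)
  hence xcc: "\<And>s. s \<in> U \<Longrightarrow> isCont x s" using U continuous_on_eq_continuous_at by blast
  have G: "(\<lambda>r. F (x r) r) = (\<lambda>r. ((- \<beta> * (1 + \<mu> * (\<phi> r \<bullet> \<phi> r))) *\<^sub>R (fst (x r) - snd (x r)),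
        (- \<gamma>) *\<^sub>R ((\<phi> r \<bullet> (fst (x r) - \<theta>s)) *\<^sub>R \<phi> r + (1 + \<mu> * (\<phi> r \<bullet> \<phi> r)) *\<^sub>R
           (\<Sum>k\<in>UNIV. (1 / (1 + \<mu> * (\<phi> (tk k) \<bullet> \<phi> (tk k)))) *\<^sub>R ((\<phi> (tk k) \<bullet> (fst (x r) - \<theta>s)) *\<^sub>R \<phi> (tk k))))))"
    apply (rule ext)
    subgoal for r using Feq[of "fst (x r)" "snd (x r)" r] by simp
    done
  show ?thesis
  proof (intro exI[of _ S] conjI ballI S(1))
    fix s assume s: "s \<in> {t0<..<t1} - S"
    hence sU: "s \<in> U" by (simp add: U_def)
    show "continuous (at s) (\<lambda>r. F (x r) r)"
      unfolding G using phc[OF sU] xcc[OF sU] by (intro continuous_intros) auto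
  qed
qed

lemma V_deriv:
  fixes \<theta>s :: "real^'n" and pk :: "'m::finite \<Rightarrow> real^'n" and w :: "'m \<Rightarrow> real" and \<beta> \<gamma> :: real
  shows "((\<lambda>X. \<gamma> * (\<Sum>k\<in>UNIV. w k * (pk k \<bullet> (fst X - \<theta>s))^2) + \<beta>/2 * ((snd X - \<theta>s) \<bullet> (snd X - \<theta>s))
                   + \<beta>/2 * ((fst X - snd X) \<bullet> (fst X - snd X)))
     has_derivative (\<lambda>h. 2 * \<gamma> * (fst h \<bullet> (\<Sum>k\<in>UNIV. w k *\<^sub>R ((pk k \<bullet> (fst X - \<theta>s)) *\<^sub>R pk k)))
         + \<beta> * ((snd X - \<theta>s) \<bullet> snd h) + \<beta> * ((fst X - snd X) \<bullet> (fst h - snd h)))) (at X)"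
proof -
  have QfI: "d \<bullet> (\<Sum>k\<in>UNIV. w k *\<^sub>R ((pk k \<bullet> e) *\<^sub>R pk k)) = (\<Sum>k\<in>UNIV. w k * (2 * (pk k \<bullet> e) * (pk k \<bullet> d))) / 2" for d e
    by (simp add: inner_sum_right inner_commute sum_divide_distrib algebra_simps)
  show ?thesis
    apply (rule has_derivative_eq_rhs)
     apply (rule derivative_eq_intros refl)+
    apply (rule ext)
    apply (subst QfI)
    apply (simp add: inner_simps inner_commute algebra_simps sum_distrib_left)
    done
qed


lemma main_ugas:
  fixes \<theta>s :: "real^'n" and \<phi> :: "real \<Rightarrow> real^'n" and tk :: "'m::finite \<Rightarrow> real"
    and \<beta> \<gamma> \<mu> :: real and F :: "(real^'n) \<times> (real^'n) \<Rightarrow> real \<Rightarrow> (real^'n) \<times> (real^'n)"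
  assumes pc: "piecewise_continuous \<phi>"
    and rank: "rank ((\<chi> i k. \<phi> (tk k) $ i) :: real^'m^'n) = CARD('n)"
    and pos: "\<beta> > 0" "\<gamma> > 0" "\<mu> > 0"
    and beta_ge: "\<beta> \<ge> 2 * \<gamma> / \<mu>"
    and Feq: "\<And>th vth t. F (th, vth) t = ((- \<beta> * (1 + \<mu> * (\<phi> t \<bullet> \<phi> t))) *\<^sub>R (th - vth),
        (- \<gamma>) *\<^sub>R ((\<phi> t \<bullet> (th - \<theta>s)) *\<^sub>R \<phi> t + (1 + \<mu> * (\<phi> t \<bullet> \<phi> t)) *\<^sub>R
           (\<Sum>k\<in>UNIV. (1 / (1 + \<mu> * (\<phi> (tk k) \<bullet> \<phi> (tk k)))) *\<^sub>R ((\<phi> (tk k) \<bullet> (th - \<theta>s)) *\<^sub>R \<phi> (tk k)))))"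
  shows "UGAS F (\<theta>s, \<theta>s)"
proof -
  define pk where "pk k = \<phi> (tk k)" for k
  define w where "w k = 1 / (1 + \<mu> * (pk k \<bullet> pk k))" for k
  have wpos: "\<forall>k. w k > 0"
  proof
    fix k have "0 \<le> \<mu> * (pk k \<bullet> pk k)" using pos by simp
    thus "w k > 0" by (simp add: w_def add_pos_nonneg)
  qed
  define qs where "qs e = (\<Sum>k\<in>UNIV. w k * (pk k \<bullet> e)^2)" for e :: "real^'n"
  define Qf where "Qf e = (\<Sum>k\<in>UNIV. w k *\<^sub>R ((pk k \<bullet> e) *\<^sub>R pk k))" for e :: "real^'n"
  define Lam where "Lam = (\<Sum>k\<in>UNIV. w k * (pk k \<bullet> pk k))"
  have Lam0: "Lam \<ge> 0" unfolding Lam_def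
    by (intro sum_nonneg mult_nonneg_nonneg less_imp_le[OF wpos[rule_format]] inner_ge_zero)
  have inj: "\<forall>e. (\<forall>k. pk k \<bullet> e = 0) \<longrightarrow> e = 0"
    using rank_inj[of pk] rank by (simp add: pk_def)
  obtain l where l: "l > 0" "\<forall>e. l * (e \<bullet> e) \<le> qs e"
    using posdef[OF inj wpos] by (auto simp: qs_def)
  have qs0: "qs e \<ge> 0" for e unfolding qs_def
    by (intro sum_nonneg mult_nonneg_nonneg less_imp_le[OF wpos[rule_format]] zero_le_power2)
  have qsle: "qs e \<le> Lam * (e \<bullet> e)" for e
  proof -
    have "qs e \<le> (\<Sum>k\<in>UNIV. w k * ((pk k \<bullet> pk k) * (e \<bullet> e)))"
      unfolding qs_def by (intro sum_mono mult_left_mono cs_sq less_imp_le[OF wpos[rule_format]])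
    also have "\<dots> = (\<Sum>k\<in>UNIV. w k * (pk k \<bullet> pk k)) * (e \<bullet> e)"
      by (simp add: sum_distrib_right mult.assoc)
    finally show ?thesis by (simp add: Lam_def)
  qed
  define c where "c = min (\<beta> * \<gamma> * l / (\<gamma> * Lam + \<beta>)) (2 * \<beta> / 3)"
  have D: "\<gamma> * Lam + \<beta> > 0" using pos Lam0 by (simp add: add_nonneg_pos)
  have c0: "c > 0" unfolding c_def using pos l D by simp
  have bg: "\<beta> * \<mu> \<ge> 2 * \<gamma>" using beta_ge pos by (simp add: pos_divide_le_eq)
  define V where "V = (\<lambda>X::(real^'n) \<times> (real^'n). \<gamma> * (\<Sum>k\<in>UNIV. w k * (pk k \<bullet> (fst X - \<theta>s))^2) + \<beta>/2 * ((snd X - \<theta>s) \<bullet> (snd X - \<theta>s))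
                   + \<beta>/2 * ((fst X - snd X) \<bullet> (fst X - snd X)))"
  define DV where "DV = (\<lambda>X h. 2 * \<gamma> * (fst h \<bullet> (\<Sum>k\<in>UNIV. w k *\<^sub>R ((pk k \<bullet> (fst X - \<theta>s)) *\<^sub>R pk k)))
         + \<beta> * ((snd X - \<theta>s) \<bullet> snd h) + \<beta> * ((fst X - snd X) \<bullet> (fst h - snd h)))"
  have Vd: "\<And>X. (V has_derivative DV X) (at X)"
    unfolding V_def DV_def by (rule V_deriv)
  have Vq: "V (th, vth) = \<gamma> * qs (th - \<theta>s) + \<beta>/2 * ((vth - \<theta>s) \<bullet> (vth - \<theta>s))
                   + \<beta>/2 * ((th - vth) \<bullet> (th - vth))" for th vth
    by (simp add: V_def qs_def)
  have dec: "DV X (F X s) \<le> - c * V X" for X s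
  proof -
    obtain th vth where X: "X = (th, vth)" by (cases X)
    define N where "N = 1 + \<mu> * (\<phi> s \<bullet> \<phi> s)"
    define de where "de = (- \<beta> * N) *\<^sub>R (th - vth)"
    define dw where "dw = (- \<gamma>) *\<^sub>R ((\<phi> s \<bullet> (th - \<theta>s)) *\<^sub>R \<phi> s + N *\<^sub>R Qf (th - \<theta>s))"
    have FX: "F X s = (de, dw)"
      unfolding X Feq de_def dw_def N_def Qf_def w_def pk_def by simp
    have "DV X (F X s) = 2 * \<gamma> * (de \<bullet> Qf (th - \<theta>s)) + \<beta> * ((vth - \<theta>s) \<bullet> dw) + \<beta> * ((th - vth) \<bullet> (de - dw))"
      unfolding FX by (simp add: X DV_def Qf_def)
    also have "\<dots> \<le> - c * (\<gamma> * qs (th - \<theta>s) + \<beta>/2 * ((vth - \<theta>s) \<bullet> (vth - \<theta>s)) + \<beta>/2 * ((th - vth) \<bullet> (th - vth)))"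
      using lyap_dec[OF pos bg l(1) l(2)[unfolded qs_def] wpos Lam_def c_def N_def de_def dw_def[unfolded Qf_def]]
      unfolding Qf_def qs_def by simp
    also have "\<dots> = - c * V X" unfolding X Vq ..
    finally show ?thesis .
  qed
  show ?thesis
  proof (rule ugas_from_lyap[of "\<beta>/6" "\<gamma> * Lam + 3 * \<beta> / 2" c])
    show "\<beta>/6 > 0" using pos by simp
    show "\<gamma> * Lam + 3 * \<beta> / 2 > 0" using pos Lam0 by (simp add: add_nonneg_pos)
    show "c > 0" by (rule c0)
  next
    fix X :: "(real^'n) \<times> (real^'n)"
    obtain th vth where X: "X = (th, vth)" by (cases X)
    show "\<beta> / 6 * (norm (X - (\<theta>s, \<theta>s)))\<^sup>2 \<le> V X"
      unfolding X Vq by (rule V_bounds(1)[OF qs0 qsle pos(1,2) Lam0])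
    show "V X \<le> (\<gamma> * Lam + 3 * \<beta> / 2) * (norm (X - (\<theta>s, \<theta>s)))\<^sup>2"
      unfolding X Vq by (rule V_bounds(2)[OF qs0 qsle pos(1,2) Lam0])
  next
    fix t0 t1 x0 x t
    assume t0: "0 \<le> t0" and sol: "is_solution_on F t0 t1 x0 x" and t: "t \<in> {t0..t1}"
    obtain S where S: "finite S" "\<forall>s\<in>{t0<..<t1} - S. continuous (at s) (\<lambda>r. F (x r) r)"
      using cont_F[OF pc pos Feq t0 sol] by blast
    show "V (x t) \<le> exp (- c * (t - t0)) * V x0"
      by (rule decay[OF sol S(1) _ Vd dec t]) (use S(2) in blast)
  qed
qed

theorem theorem3:
  fixes \<theta>s :: "real^'n"
    and \<phi> :: "real \<Rightarrow> real^'n"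
    and tk :: "'m::finite \<Rightarrow> real"
    and \<beta> \<gamma> \<mu> :: real
  assumes pc: "piecewise_continuous \<phi>"
    and bdd: "\<exists>M. \<forall>t\<ge>0. norm (\<phi> t) \<le> M"
    and tk_nonneg: "\<forall>k. tk k \<ge> 0"
    and rank: "rank ((\<chi> i k. \<phi> (tk k) $ i) :: real^'m^'n) = CARD('n)"
    and pos: "\<beta> > 0" "\<gamma> > 0" "\<mu> > 0"
    and beta_ge: "\<beta> \<ge> 2 * \<gamma> / \<mu>"
  shows "UGAS
     (\<lambda>(th, vth) t.
        let ys = (\<lambda>s. \<phi> s \<bullet> \<theta>s);
            Nt = 1 + \<mu> * (\<phi> t \<bullet> \<phi> t);
            B = (\<Sum>k\<in>UNIV. (1 / (1 + \<mu> * (\<phi> (tk k) \<bullet> \<phi> (tk k)))) *\<^sub>R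
                   ((\<phi> (tk k) \<bullet> th - ys (tk k)) *\<^sub>R \<phi> (tk k)))
        in ((- \<beta> * Nt) *\<^sub>R (th - vth),
            (- \<gamma>) *\<^sub>R ((\<phi> t \<bullet> th - ys t) *\<^sub>R \<phi> t + Nt *\<^sub>R B)))
     (\<theta>s, \<theta>s)"
  by (rule main_ugas[OF pc rank pos beta_ge]) (simp add: Let_def inner_diff_right)

end
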